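(* Let $(M,\diamond,\bullet,\alpha_M)$ be a module over the multiplicative Hom-post-Lie algebra $(L,[\cdot,\cdot],\cdot,\alpha)$. Let $\beta_M:M\to M$ be a linear map such that $\alpha_M\circ\beta_M=\beta_M\circ\alpha_M$, $\beta_M(x\diamond m)=\alpha(x)\diamond\beta_M(m)$ and $\beta_M(x\bullet m)=\alpha(x)\bullet\beta_M(m)$ for all $x\in L,m\in M$. Define $x\,\tilde\diamond\, m=\beta_M(\alpha(x)\diamond m)$ and $x\,\tilde\bullet\, m=\beta_M(\alpha(x)\bullet m)$. Then $(M,\tilde\diamond,\tilde\bullet,\alpha_M\circ\beta_M)$ is a module over $(L,\alpha\circ[\cdot,\cdot],\alpha\circ\cdot,\alpha^2)$.
   Context: All vector spaces are over a field $\mathbb{K}$ of characteristic $\neq 2$. A Hom-Lie algebra is $(L,[\cdot,\cdot],\alpha)$ with $[\cdot,\cdot]$ bilinear skew-symmetric, $\alpha$ linear, and $[\alpha(x),[y,z]]+[\alpha(y),[z,x]]+[\alpha(z),[x,y]]=0$. A Hom-post-Lie algebra $(L,[\cdot,\cdot],\cdot,\alpha)$ is a Hom-Lie algebra with bilinear $\cdot$ such that $\alpha(z)\cdot[x,y]-[z\cdot x,\alpha(y)]-[\alpha(x),z\cdot y]=0$ and $\alpha(z)\cdot(y\cdot x)-\alpha(y)\cdot(z\cdot x)+(y\cdot z)\cdot\alpha(x)-(z\cdot y)\cdot\alpha(x)+[y,z]\cdot\alpha(x)=0$ for all $x,y,z$; it is multiplicative if $\alpha([x,y])=[\alpha(x),\alpha(y)]$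 and $\alpha(x\cdot y)=\alpha(x)\cdot\alpha(y)$. A module over a Hom-post-Lie algebra $(L,[\cdot,\cdot],\cdot,\alpha)$ is a vector space $M$ with linear $\alpha_M$ and bilinear $\diamond,\bullet:L\otimes M\to M$ such that for all $x,y\in L,m\in M$: (i) $\alpha_M(x\diamond m)=\alpha(x)\diamond\alpha_M(m)$, $\alpha_M(x\bullet m)=\alpha(x)\bullet\alpha_M(m)$; (ii) $[x,y]\diamond\alpha_M(m)=\alpha(x)\diamond(y\diamond m)-\alpha(y)\diamond(x\diamond m)$; (iii) $(x\cdot y)\diamond\alpha_M(m)=\alpha(x)\bullet(y\diamond m)-\alpha(y)\diamond(x\bullet m)$; (iv) $[x,y]\bullet\alpha_M(m)=\alpha(x)\bullet(y\bullet m)-\alpha(y)\bullet(x\bullet m)-(x\cdot y)\bullet\alpha_M(m)+(y\cdot x)\bullet\alpha_M(m)$. *)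

theory Defs
  imports Complex_Main
begin

definition bilinear_map ::
  "('k::field \<Rightarrow> 'a::ab_group_add \<Rightarrow> 'a) \<Rightarrow> ('k \<Rightarrow> 'b::ab_group_add \<Rightarrow> 'b)
   \<Rightarrow> ('k \<Rightarrow> 'c::ab_group_add \<Rightarrow> 'c) \<Rightarrow> ('a \<Rightarrow> 'b \<Rightarrow> 'c) \<Rightarrow> bool" where
  "bilinear_map sA sB sC f \<longleftrightarrow>
     (\<forall>x. Vector_Spaces.linear sB sC (f x)) \<and> (\<forall>y. Vector_Spaces.linear sA sC (\<lambda>x. f x y))"

definition hom_lie_algebra ::
  "('k::field \<Rightarrow> 'l::ab_group_add \<Rightarrow> 'l) \<Rightarrow> ('l \<Rightarrow> 'l \<Rightarrow> 'l) \<Rightarrow> ('l \<Rightarrow> 'l) \<Rightarrow> bool" where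
  "hom_lie_algebra sL br \<alpha> \<longleftrightarrow>
     vector_space sL \<and> bilinear_map sL sL sL br \<and> (\<forall>x y. br x y = - br y x) \<and>
     Vector_Spaces.linear sL sL \<alpha> \<and>
     (\<forall>x y z. br (\<alpha> x) (br y z) + br (\<alpha> y) (br z x) + br (\<alpha> z) (br x y) = 0)"

definition hom_post_lie_algebra ::
  "('k::field \<Rightarrow> 'l::ab_group_add \<Rightarrow> 'l) \<Rightarrow> ('l \<Rightarrow> 'l \<Rightarrow> 'l) \<Rightarrow> ('l \<Rightarrow> 'l \<Rightarrow> 'l)
   \<Rightarrow> ('l \<Rightarrow> 'l) \<Rightarrow> bool" where
  "hom_post_lie_algebra sL br dot \<alpha> \<longleftrightarrow>
     hom_lie_algebra sL br \<alpha> \<and> bilinear_map sL sL sL dot \<and>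
     (\<forall>x y z. dot (\<alpha> z) (br x y) - br (dot z x) (\<alpha> y) - br (\<alpha> x) (dot z y) = 0) \<and>
     (\<forall>x y z. dot (\<alpha> z) (dot y x) - dot (\<alpha> y) (dot z x) + dot (dot y z) (\<alpha> x)
               - dot (dot z y) (\<alpha> x) + dot (br y z) (\<alpha> x) = 0)"

definition multiplicative_hom_post_lie ::
  "('k::field \<Rightarrow> 'l::ab_group_add \<Rightarrow> 'l) \<Rightarrow> ('l \<Rightarrow> 'l \<Rightarrow> 'l) \<Rightarrow> ('l \<Rightarrow> 'l \<Rightarrow> 'l)
   \<Rightarrow> ('l \<Rightarrow> 'l) \<Rightarrow> bool" where
  "multiplicative_hom_post_lie sL br dot \<alpha> \<longleftrightarrow>
     hom_post_lie_algebra sL br dot \<alpha> \<and>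
     (\<forall>x y. \<alpha> (br x y) = br (\<alpha> x) (\<alpha> y)) \<and> (\<forall>x y. \<alpha> (dot x y) = dot (\<alpha> x) (\<alpha> y))"

definition hom_post_lie_module ::
  "('k::field \<Rightarrow> 'l::ab_group_add \<Rightarrow> 'l) \<Rightarrow> ('l \<Rightarrow> 'l \<Rightarrow> 'l) \<Rightarrow> ('l \<Rightarrow> 'l \<Rightarrow> 'l) \<Rightarrow> ('l \<Rightarrow> 'l)
   \<Rightarrow> ('k \<Rightarrow> 'm::ab_group_add \<Rightarrow> 'm) \<Rightarrow> ('l \<Rightarrow> 'm \<Rightarrow> 'm) \<Rightarrow> ('l \<Rightarrow> 'm \<Rightarrow> 'm)
   \<Rightarrow> ('m \<Rightarrow> 'm) \<Rightarrow> bool" where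
  "hom_post_lie_module sL br dot \<alpha> sM dia bul \<alpha>M \<longleftrightarrow>
     hom_post_lie_algebra sL br dot \<alpha> \<and> vector_space sM \<and>
     Vector_Spaces.linear sM sM \<alpha>M \<and>
     bilinear_map sL sM sM dia \<and> bilinear_map sL sM sM bul \<and>
     (\<forall>x m. \<alpha>M (dia x m) = dia (\<alpha> x) (\<alpha>M m)) \<and>
     (\<forall>x m. \<alpha>M (bul x m) = bul (\<alpha> x) (\<alpha>M m)) \<and>
     (\<forall>x y m. dia (br x y) (\<alpha>M m) = dia (\<alpha> x) (dia y m) - dia (\<alpha> y) (dia x m)) \<and>
     (\<forall>x y m. dia (dot x y) (\<alpha>M m) = bul (\<alpha> x) (dia y m) - dia (\<alpha> y) (bul x m)) \<and>
     (\<forall>x y m. bul (br x y) (\<alpha>M m) = bul (\<alpha> x) (bul y m) - bul (\<alpha> y) (bul x m)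
                 - bul (dot x y) (\<alpha>M m) + bul (dot y x) (\<alpha>M m))"

end

theory Submission
  imports Defs
begin

lemma lin_ops:
  assumes "Vector_Spaces.linear s1 s2 f"
  shows "f (a + b) = f a + f b" "f (a - b) = f a - f b" "f 0 = 0" "f (- a) = - f a"
proof -
  interpret module_hom s1 s2 f using assms by (simp add: linear_iff_module_hom)
  show "f (a + b) = f a + f b" by (rule add)
  show "f (a - b) = f a - f b" by (rule diff)
  show "f 0 = 0" by (rule zero)
  show "f (- a) = - f a" by (rule neg)
qed

lemma lin_comp: "Vector_Spaces.linear s1 s2 f \<Longrightarrow> Vector_Spaces.linear s2 s3 g \<Longrightarrow> Vector_Spaces.linear s1 s3 (\<lambda>x. g (f x))"
  using Vector_Spaces.linear_compose[of s1 s2 f s3 g] by (simp add: o_def)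

theorem mainTheorem9:
  fixes sL :: "'k::field \<Rightarrow> 'l::ab_group_add \<Rightarrow> 'l"
    and sM :: "'k \<Rightarrow> 'm::ab_group_add \<Rightarrow> 'm"
    and br dot :: "'l \<Rightarrow> 'l \<Rightarrow> 'l" and \<alpha> :: "'l \<Rightarrow> 'l"
    and dia bul :: "'l \<Rightarrow> 'm \<Rightarrow> 'm" and \<alpha>M \<beta>M :: "'m \<Rightarrow> 'm"
  assumes char: "(2::'k) \<noteq> 0"
    and mult: "multiplicative_hom_post_lie sL br dot \<alpha>"
    and modl: "hom_post_lie_module sL br dot \<alpha> sM dia bul \<alpha>M"
    and linb: "Vector_Spaces.linear sM sM \<beta>M"
    and comm: "\<alpha>M \<circ> \<beta>M = \<beta>M \<circ> \<alpha>M"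
    and bdia: "\<And>x m. \<beta>M (dia x m) = dia (\<alpha> x) (\<beta>M m)"
    and bbul: "\<And>x m. \<beta>M (bul x m) = bul (\<alpha> x) (\<beta>M m)"
  shows "hom_post_lie_module sL (\<lambda>x y. \<alpha> (br x y)) (\<lambda>x y. \<alpha> (dot x y)) (\<alpha> \<circ> \<alpha>)
           sM (\<lambda>x m. \<beta>M (dia (\<alpha> x) m)) (\<lambda>x m. \<beta>M (bul (\<alpha> x) m)) (\<alpha>M \<circ> \<beta>M)"
proof -
  from mult have mbr: "\<And>x y. \<alpha> (br x y) = br (\<alpha> x) (\<alpha> y)"
    and mdot: "\<And>x y. \<alpha> (dot x y) = dot (\<alpha> x) (\<alpha> y)"
    and hp: "hom_post_lie_algebra sL br dot \<alpha>"
    unfolding multiplicative_hom_post_lie_def by auto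
  from hp have hl: "hom_lie_algebra sL br \<alpha>" and bld: "bilinear_map sL sL sL dot"
    and pl1: "\<And>x y z. dot (\<alpha> z) (br x y) - br (dot z x) (\<alpha> y) - br (\<alpha> x) (dot z y) = 0"
    and pl2: "\<And>x y z. dot (\<alpha> z) (dot y x) - dot (\<alpha> y) (dot z x) + dot (dot y z) (\<alpha> x)
               - dot (dot z y) (\<alpha> x) + dot (br y z) (\<alpha> x) = 0"
    unfolding hom_post_lie_algebra_def by auto
  from hl have vsL: "vector_space sL" and blb: "bilinear_map sL sL sL br"
    and skew: "\<And>x y. br x y = - br y x" and la: "Vector_Spaces.linear sL sL \<alpha>"
    and jac: "\<And>x y z. br (\<alpha> x) (br y z) + br (\<alpha> y) (br z x) + br (\<alpha> z) (br x y) = 0"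
    unfolding hom_lie_algebra_def by blast+
  from modl have vsM: "vector_space sM" and laM: "Vector_Spaces.linear sM sM \<alpha>M"
    and bldia: "bilinear_map sL sM sM dia" and blbul: "bilinear_map sL sM sM bul"
    and m1: "\<And>x m. \<alpha>M (dia x m) = dia (\<alpha> x) (\<alpha>M m)"
    and m2: "\<And>x m. \<alpha>M (bul x m) = bul (\<alpha> x) (\<alpha>M m)"
    and m3: "\<And>x y m. dia (br x y) (\<alpha>M m) = dia (\<alpha> x) (dia y m) - dia (\<alpha> y) (dia x m)"
    and m4: "\<And>x y m. dia (dot x y) (\<alpha>M m) = bul (\<alpha> x) (dia y m) - dia (\<alpha> y) (bul x m)"
    and m5: "\<And>x y m. bul (br x y) (\<alpha>M m) = bul (\<alpha> x) (bul y m) - bul (\<alpha> y) (bul x m)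
                 - bul (dot x y) (\<alpha>M m) + bul (dot y x) (\<alpha>M m)"
    unfolding hom_post_lie_module_def by auto
  have cm: "\<And>m. \<alpha>M (\<beta>M m) = \<beta>M (\<alpha>M m)" using comm by (metis comp_apply)
  note aops = lin_ops[OF la] and bops = lin_ops[OF linb]
  have linbr: "Vector_Spaces.linear sL sL (br x)" "Vector_Spaces.linear sL sL (\<lambda>x. br x y)" for x y
    using blb unfolding bilinear_map_def by auto
  have lindot: "Vector_Spaces.linear sL sL (dot x)" "Vector_Spaces.linear sL sL (\<lambda>x. dot x y)" for x y
    using bld unfolding bilinear_map_def by auto
  have lindia: "Vector_Spaces.linear sM sM (dia x)" "Vector_Spaces.linear sL sM (\<lambda>x. dia x m)" for x m
    using bldia unfolding bilinear_map_def by auto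
  have linbul: "Vector_Spaces.linear sM sM (bul x)" "Vector_Spaces.linear sL sM (\<lambda>x. bul x m)" for x m
    using blbul unfolding bilinear_map_def by auto
  have A: "hom_post_lie_algebra sL (\<lambda>x y. \<alpha> (br x y)) (\<lambda>x y. \<alpha> (dot x y)) (\<alpha> \<circ> \<alpha>)"
    unfolding hom_post_lie_algebra_def hom_lie_algebra_def bilinear_map_def
  proof (intro conjI allI)
    show "vector_space sL" by fact
    show "Vector_Spaces.linear sL sL (\<alpha> \<circ> \<alpha>)" using lin_comp[OF la la] by (simp add: o_def)
    fix x y z
    show "Vector_Spaces.linear sL sL (\<lambda>y. \<alpha> (br x y))" by (rule lin_comp[OF linbr(1) la])
    show "Vector_Spaces.linear sL sL (\<lambda>x. \<alpha> (br x y))" by (rule lin_comp[OF linbr(2) la])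
    show "Vector_Spaces.linear sL sL (\<lambda>y. \<alpha> (dot x y))" by (rule lin_comp[OF lindot(1) la])
    show "Vector_Spaces.linear sL sL (\<lambda>x. \<alpha> (dot x y))" by (rule lin_comp[OF lindot(2) la])
    show "\<alpha> (br x y) = - \<alpha> (br y x)" using skew[of x y] aops(4) by simp
    have "\<alpha> (\<alpha> (br (\<alpha> x) (br y z) + br (\<alpha> y) (br z x) + br (\<alpha> z) (br x y))) = 0"
      using jac aops(3) by simp
    then show "\<alpha> (br ((\<alpha> \<circ> \<alpha>) x) (\<alpha> (br y z))) + \<alpha> (br ((\<alpha> \<circ> \<alpha>) y) (\<alpha> (br z x))) +
          \<alpha> (br ((\<alpha> \<circ> \<alpha>) z) (\<alpha> (br x y))) = 0"
      by (simp add: aops mbr)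
    have "\<alpha> (\<alpha> (dot (\<alpha> z) (br x y) - br (dot z x) (\<alpha> y) - br (\<alpha> x) (dot z y))) = 0"
      using pl1 aops(3) by simp
    then show "\<alpha> (dot ((\<alpha> \<circ> \<alpha>) z) (\<alpha> (br x y))) - \<alpha> (br (\<alpha> (dot z x)) ((\<alpha> \<circ> \<alpha>) y)) -
          \<alpha> (br ((\<alpha> \<circ> \<alpha>) x) (\<alpha> (dot z y))) = 0"
      by (simp add: aops mbr mdot)
    have "\<alpha> (\<alpha> (dot (\<alpha> z) (dot y x) - dot (\<alpha> y) (dot z x) + dot (dot y z) (\<alpha> x)
               - dot (dot z y) (\<alpha> x) + dot (br y z) (\<alpha> x))) = 0"
      using pl2 aops(3) by simp
    then show "\<alpha> (dot ((\<alpha> \<circ> \<alpha>) z) (\<alpha> (dot y x))) - \<alpha> (dot ((\<alpha> \<circ> \<alpha>) y) (\<alpha> (dot z x))) +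
          \<alpha> (dot (\<alpha> (dot y z)) ((\<alpha> \<circ> \<alpha>) x)) - \<alpha> (dot (\<alpha> (dot z y)) ((\<alpha> \<circ> \<alpha>) x)) +
          \<alpha> (dot (\<alpha> (br y z)) ((\<alpha> \<circ> \<alpha>) x)) = 0"
      by (simp add: aops mbr mdot)
  qed
  show ?thesis
    unfolding hom_post_lie_module_def bilinear_map_def
  proof (intro conjI allI)
    show "hom_post_lie_algebra sL (\<lambda>x y. \<alpha> (br x y)) (\<lambda>x y. \<alpha> (dot x y)) (\<alpha> \<circ> \<alpha>)" by (rule A)
    show "vector_space sM" by fact
    show "Vector_Spaces.linear sM sM (\<alpha>M \<circ> \<beta>M)" using lin_comp[OF linb laM] by (simp add: o_def)
    fix x y m
    show "Vector_Spaces.linear sM sM (\<lambda>m. \<beta>M (dia (\<alpha> x) m))" by (rule lin_comp[OF lindia(1) linb])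
    show "Vector_Spaces.linear sM sM (\<lambda>m. \<beta>M (bul (\<alpha> x) m))" by (rule lin_comp[OF linbul(1) linb])
    show "Vector_Spaces.linear sL sM (\<lambda>x. \<beta>M (dia (\<alpha> x) m))" by (rule lin_comp[OF lin_comp[OF la lindia(2)] linb])
    show "Vector_Spaces.linear sL sM (\<lambda>x. \<beta>M (bul (\<alpha> x) m))" by (rule lin_comp[OF lin_comp[OF la linbul(2)] linb])
    show "(\<alpha>M \<circ> \<beta>M) (\<beta>M (dia (\<alpha> x) m)) = \<beta>M (dia (\<alpha> ((\<alpha> \<circ> \<alpha>) x)) ((\<alpha>M \<circ> \<beta>M) m))"
      by (simp add: bdia m1 cm)
    show "(\<alpha>M \<circ> \<beta>M) (\<beta>M (bul (\<alpha> x) m)) = \<beta>M (bul (\<alpha> ((\<alpha> \<circ> \<alpha>) x)) ((\<alpha>M \<circ> \<beta>M) m))"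
      by (simp add: bbul m2 cm)
    show "\<beta>M (dia (\<alpha> (\<alpha> (br x y))) ((\<alpha>M \<circ> \<beta>M) m)) =
          \<beta>M (dia (\<alpha> ((\<alpha> \<circ> \<alpha>) x)) (\<beta>M (dia (\<alpha> y) m))) - \<beta>M (dia (\<alpha> ((\<alpha> \<circ> \<alpha>) y)) (\<beta>M (dia (\<alpha> x) m)))"
      using m3[of "\<alpha> (\<alpha> x)" "\<alpha> (\<alpha> y)" "\<beta>M m"] by (simp add: mbr bdia bops)
    show "\<beta>M (dia (\<alpha> (\<alpha> (dot x y))) ((\<alpha>M \<circ> \<beta>M) m)) =
          \<beta>M (bul (\<alpha> ((\<alpha> \<circ> \<alpha>) x)) (\<beta>M (dia (\<alpha> y) m))) - \<beta>M (dia (\<alpha> ((\<alpha> \<circ> \<alpha>) y)) (\<beta>M (bul (\<alpha> x) m)))"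
      using m4[of "\<alpha> (\<alpha> x)" "\<alpha> (\<alpha> y)" "\<beta>M m"] by (simp add: mdot bdia bbul bops)
    show "\<beta>M (bul (\<alpha> (\<alpha> (br x y))) ((\<alpha>M \<circ> \<beta>M) m)) =
          \<beta>M (bul (\<alpha> ((\<alpha> \<circ> \<alpha>) x)) (\<beta>M (bul (\<alpha> y) m))) - \<beta>M (bul (\<alpha> ((\<alpha> \<circ> \<alpha>) y)) (\<beta>M (bul (\<alpha> x) m))) -
          \<beta>M (bul (\<alpha> (\<alpha> (dot x y))) ((\<alpha>M \<circ> \<beta>M) m)) + \<beta>M (bul (\<alpha> (\<alpha> (dot y x))) ((\<alpha>M \<circ> \<beta>M) m))"
      using m5[of "\<alpha> (\<alpha> x)" "\<alpha> (\<alpha> y)" "\<beta>M m"] by (simp add: mbr mdot bbul bops)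
  qed
qed

end
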